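(* Let $G$ be a multi-hypergraph all of whose edges have size 1 (loops) or size 2, such that each vertex has at most one loop (while 2-edges may have arbitrary multiplicity). Then $\operatorname{ex}(G,\mathcal{D})\geq\frac{2}{3}e(G)$.
   Context: The dumbbell $\mathcal{D}$ is the hypergraph on two vertices $u,v$ with edges $\{u,v\},\{u\},\{v\}$. A copy of $\mathcal{D}$ in $G$ is a sub-multihypergraph isomorphic to $\mathcal{D}$ (preserving edge sizes). $e(G)$ counts all edges (loops and 2-edges) with multiplicity, and $\operatorname{ex}(G,\mathcal{D})$ is the maximum number of edges (with multiplicity) of a sub-multihypergraph of $G$ containing no copy of $\mathcal{D}$. *)

theory Defs
  imports Complex_Main "HOL-Library.Multiset"
begin

text \<open>A multi-hypergraph with edges of size 1 and 2 on vertex set V, where each vertex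
carries at most one loop: the loops are given by the set L of looped vertices,
the 2-edges by a multiset E of 2-element vertex sets (arbitrary multiplicity).\<close>

definition loop2_graph :: "'a set \<Rightarrow> 'a set \<Rightarrow> 'a set multiset \<Rightarrow> bool" where
  "loop2_graph V L E \<longleftrightarrow> finite V \<and> L \<subseteq> V \<and> (\<forall>e \<in># E. e \<subseteq> V \<and> card e = 2)"

definition num_edges :: "'a set \<Rightarrow> 'a set multiset \<Rightarrow> nat" where
  "num_edges L E = card L + size E"

definition has_dumbbell :: "'a set \<Rightarrow> 'a set multiset \<Rightarrow> bool" where
  "has_dumbbell L E \<longleftrightarrow> (\<exists>u v. u \<noteq> v \<and> {u, v} \<in># E \<and> u \<in> L \<and> v \<in> L)"

definition ex_dumbbell :: "'a set \<Rightarrow> 'a set multiset \<Rightarrow> nat" where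
  "ex_dumbbell L E = Max {num_edges L' E' | L' E'. L' \<subseteq> L \<and> E' \<subseteq># E \<and> \<not> has_dumbbell L' E'}"

end

theory Submission
  imports Defs
begin

lemma card2_ex: assumes "card e = 2" "v \<in> e" shows "\<exists>w. w \<noteq> v \<and> e = {v, w}"
proof -
  obtain a b where ab: "a \<noteq> b" "e = {a, b}" using assms(1) by (meson card_2_iff)
  then show ?thesis using assms(2) by auto
qed

lemma key:
  fixes L :: "'a set" and E :: "'a set multiset"
  assumes "finite L" "\<forall>e\<in>#E. card e = 2"
  shows "\<exists>L' E'. L' \<subseteq> L \<and> E' \<subseteq># E \<and> \<not> has_dumbbell L' E' \<and>
           2 * (card L + size E) \<le> 3 * (card L' + size E')"
  using assms
proof (induction "card L" arbitrary: L E rule: less_induct)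
  case less
  define F where "F v = filter_mset (\<lambda>e. v \<in> e \<and> e \<subseteq> L) E" for v
  have FE: "F v \<subseteq># E" for v unfolding F_def by simp
  show ?case
  proof (cases "L = {}")
    case True
    then show ?thesis by (rule_tac x="{}" in exI, rule_tac x=E in exI) (auto simp: has_dumbbell_def)
  next
    case nonempty: False
    show ?thesis
    proof (cases "\<exists>v\<in>L. size (F v) = 0")
      case True
      then obtain v where v: "v \<in> L" "F v = {#}" by auto
      have lt: "card (L - {v}) < card L" using v less.prems(1) by (meson card_Diff1_less)
      obtain L1 E1 where h: "L1 \<subseteq> L - {v}" "E1 \<subseteq># E" "\<not> has_dumbbell L1 E1"
        "2 * (card (L - {v}) + size E) \<le> 3 * (card L1 + size E1)"
        using less.hyps[OF lt, of E] less.prems by auto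
      have nd: "\<not> has_dumbbell (insert v L1) E1"
      proof
        assume "has_dumbbell (insert v L1) E1"
        then obtain a b where ab: "a \<noteq> b" "{a,b} \<in># E1" "a \<in> insert v L1" "b \<in> insert v L1"
          unfolding has_dumbbell_def by blast
        have inE: "{a,b} \<in># E" using ab(2) h(2) by (meson mset_subset_eqD)
        consider "a = v" "b \<in> L1" | "b = v" "a \<in> L1" | "a \<in> L1" "b \<in> L1"
          using ab by auto
        then show False
        proof cases
          case 1
          then have "{a,b} \<in># F v" using inE h(1) v(1) unfolding F_def by auto
          then show False using v(2) by simp
        next
          case 2
          then have "{a,b} \<in># F v" using inE h(1) v(1) unfolding F_def by auto
          then show False using v(2) by simp
        next
          case 3
          then show False using h(3) ab unfolding has_dumbbell_def by blast
        qed
      qed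
      have "v \<notin> L1" using h(1) by auto
      moreover have "finite L1" using h(1) less.prems(1) finite_subset by blast
      ultimately have "card (insert v L1) = card L1 + 1" by simp
      moreover have "card (L - {v}) = card L - 1" using v(1) less.prems(1) by simp
      moreover have "card L \<ge> 1" using lt by linarith
      ultimately have ar: "2 * (card L + size E) \<le> 3 * (card (insert v L1) + size E1)"
        using h(4) by (simp add: distrib_left)
      have "insert v L1 \<subseteq> L" using h(1) v(1) by auto
      then show ?thesis using h(2) nd ar by blast
    next
      case False
      note nz = False
      show ?thesis
      proof (cases "\<exists>v\<in>L. size (F v) \<ge> 2")
        case True
        then obtain v where v: "v \<in> L" "size (F v) \<ge> 2" by auto
        have lt: "card (L - {v}) < card L" using v less.prems(1) by (meson card_Diff1_less)
        have pr: "\<forall>e\<in>#E - F v. card e = 2" using less.prems(2) by (meson in_diffD)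
        obtain L1 E1 where h: "L1 \<subseteq> L - {v}" "E1 \<subseteq># E - F v" "\<not> has_dumbbell L1 E1"
          "2 * (card (L - {v}) + size (E - F v)) \<le> 3 * (card L1 + size E1)"
          using less.hyps[OF lt, of "E - F v"] less.prems(1) pr by auto
        have sub: "E1 + F v \<subseteq># E" using h(2) FE
          by (metis subset_mset.add_le_cancel_right subset_mset.diff_add)
        have nd: "\<not> has_dumbbell L1 (E1 + F v)"
        proof
          assume "has_dumbbell L1 (E1 + F v)"
          then obtain a b where ab: "a \<noteq> b" "{a,b} \<in># E1 + F v" "a \<in> L1" "b \<in> L1"
            unfolding has_dumbbell_def by blast
          show False
          proof (cases "{a,b} \<in># F v")
            case True
            then have "v \<in> {a,b}" unfolding F_def by simp
            then show False using ab h(1) by auto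
          next
            case False
            then have "{a,b} \<in># E1" using ab(2) by simp
            then show False using h(3) ab unfolding has_dumbbell_def by blast
          qed
        qed
        have "size (E - F v) = size E - size (F v)" using FE by (simp add: size_Diff_submset)
        moreover have "size (F v) \<le> size E" using FE by (simp add: size_mset_mono)
        moreover have "card (L - {v}) = card L - 1" using v(1) less.prems(1) by simp
        moreover have "card L \<ge> 1" using lt by linarith
        ultimately have ar: "2 * (card L + size E) \<le> 3 * (card L1 + size (E1 + F v))"
          using h(4) v(2) by simp
        have "L1 \<subseteq> L" using h(1) by auto
        then show ?thesis using sub nd ar by blast
      next
        case False
        have one: "\<forall>u\<in>L. size (F u) = 1" proof
          fix u assume "u \<in> L"
          then have "size (F u) \<noteq> 0" "\<not> 2 \<le> size (F u)" using nz False by auto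
          then show "size (F u) = 1" by linarith
        qed
        obtain v where v: "v \<in> L" using nonempty by auto
        then obtain e where e: "F v = {#e#}" using one by (metis One_nat_def size_1_singleton_mset)
        have eF: "e \<in># F v" using e by simp
        then have eE: "e \<in># E" "v \<in> e" "e \<subseteq> L" unfolding F_def by auto
        have ce: "card e = 2" using less.prems(2) eE(1) by blast
        obtain w where w: "w \<noteq> v" "e = {v, w}" using card2_ex[OF ce eE(2)] by blast
        have wL: "w \<in> L" using eE w by auto
        have vwL: "{v, w} \<subseteq> L" using v wL by auto
        have c2: "card {v, w} = 2" using w(1) by auto
        have cD: "card (L - {v, w}) = card L - 2" using vwL c2 less.prems(1)
          by (simp add: card_Diff_subset finite_subset)
        have cL: "card L \<ge> 2" using card_mono[OF less.prems(1) vwL] c2 by simp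
        have lt: "card (L - {v, w}) < card L" using cD cL by linarith
        have pr: "\<forall>x\<in>#E - {#e#}. card x = 2" using less.prems(2) by (meson in_diffD)
        obtain L1 E1 where h: "L1 \<subseteq> L - {v, w}" "E1 \<subseteq># E - {#e#}" "\<not> has_dumbbell L1 E1"
          "2 * (card (L - {v, w}) + size (E - {#e#})) \<le> 3 * (card L1 + size E1)"
          using less.hyps[OF lt, of "E - {#e#}"] less.prems(1) pr by auto
        have sub: "E1 + {#e#} \<subseteq># E" using h(2) eE(1)
          by (metis insert_DiffM2 subset_mset.add_right_mono)
        have nd: "\<not> has_dumbbell (insert v L1) (E1 + {#e#})"
        proof
          assume "has_dumbbell (insert v L1) (E1 + {#e#})"
          then obtain a b where ab: "a \<noteq> b" "{a,b} \<in># E1 + {#e#}" "a \<in> insert v L1" "b \<in> insert v L1"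
            unfolding has_dumbbell_def by blast
          show False
          proof (cases "{a,b} = e")
            case True
            then have "w \<in> {a,b}" using w by auto
            then show False using ab h(1) w(1) by auto
          next
            case False
            then have ab1: "{a,b} \<in># E1" using ab(2) by simp
            have inE: "{a,b} \<in># E" using ab1 h(2) by (meson in_diffD mset_subset_eqD)
            consider "a = v" "b \<in> L1" | "b = v" "a \<in> L1" | "a \<in> L1" "b \<in> L1"
              using ab by auto
            then show False
            proof cases
              case 1
              then have "{a,b} \<in># F v" using inE h(1) v unfolding F_def by auto
              then show False using e False by simp
            next
              case 2
              then have "{a,b} \<in># F v" using inE h(1) v unfolding F_def by auto
              then show False using e False by simp
            next
              case 3
              then show False using h(3) ab ab1 unfolding has_dumbbell_def by blast
            qed
          qed
        qed
        have "v \<notin> L1" using h(1) by auto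
        moreover have "finite L1" using h(1) less.prems(1) finite_subset by blast
        ultimately have "card (insert v L1) = card L1 + 1" by simp
        moreover note cD cL
        moreover have "size (E - {#e#}) = size E - 1" using eE(1) by (simp add: size_Diff_submset)
        moreover have "size E \<ge> 1" proof -
          have "size E \<noteq> 0" using eE(1) by auto
          then show ?thesis by linarith
        qed
        ultimately have ar: "2 * (card L + size E) \<le> 3 * (card (insert v L1) + size (E1 + {#e#}))"
          using h(4) by simp
        have "insert v L1 \<subseteq> L" using h(1) v by auto
        then show ?thesis using sub nd ar by blast
      qed
    qed
  qed
qed

theorem theorem4p4:
  fixes V L :: "'a set" and E :: "'a set multiset"
  assumes "loop2_graph V L E"
  shows "real (ex_dumbbell L E) \<ge> 2 / 3 * real (num_edges L E)"
proof -
  have fL: "finite L" using assms unfolding loop2_graph_def by (meson finite_subset)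
  have c2: "\<forall>e\<in>#E. card e = 2" using assms unfolding loop2_graph_def by blast
  obtain L' E' where h: "L' \<subseteq> L" "E' \<subseteq># E" "\<not> has_dumbbell L' E'"
    "2 * (card L + size E) \<le> 3 * (card L' + size E')" using key[OF fL c2] by blast
  let ?S = "{num_edges L' E' | L' E'. L' \<subseteq> L \<and> E' \<subseteq># E \<and> \<not> has_dumbbell L' E'}"
  have "?S \<subseteq> {0..card L + size E}"
    using fL by (auto simp: num_edges_def intro!: add_mono card_mono size_mset_mono)
  then have fin: "finite ?S" using finite_subset by blast
  have "num_edges L' E' \<in> ?S" using h by blast
  then have "num_edges L' E' \<le> ex_dumbbell L E" unfolding ex_dumbbell_def using fin by (rule Max_ge[rotated])
  then have "3 * num_edges L' E' \<le> 3 * ex_dumbbell L E" by simp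
  then have "2 * num_edges L E \<le> 3 * ex_dumbbell L E" using h(4) unfolding num_edges_def by linarith
  then show ?thesis by linarith
qed

end
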